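(* Let $G$ be a finite abelian group, $H_1$ a subgroup of $G$, and $A_1$ a proper subset of $H_1$ such that the elements $x-y$ ($x,y\in A_1$) generate $H_1$. Let $S$ be the set of all subgroups $J\le G$ such that $A_1$ is a union of cosets of $J$. Choose any set (possibly empty) of cosets of $H_1$ different from $H_1$ itself, and partition each chosen coset into cosets of subgroups belonging to $S$. Let $\mathcal{A}$ consist of $A_1$ together with all sets in these partitions. Then $\mathcal{A}$ is a bimodal collection of pairwise disjoint subsets of $G$ in which $A_1$ is the unique member whose size is smaller than the order of its internal difference group.
   Context: $G$ is written additively. The internal difference group of a subset $T\subseteq G$ is the subgroup generated by all $x-y$ with $x,y\in T$. A collection $\{A_1,\dots,A_m\}$ of pairwise disjoint subsets of $G$ is bimodal if for every $i$ and every $\delta\in G\setminus\{0\}$, the number $N_i(\delta)$ of pairs $(a,b)$ with $a\in A_i$, $b\in A_j$ for some $j\neq i$, and $a-b=\delta$, satisfies $N_i(\delta)\in\{0,|A_i|\}$. *)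

theory Defs
  imports Main "HOL-Library.Disjoint_Sets"
begin

text \<open>The finite abelian group G is the ambient type 'a :: {finite, ab_group_add}.\<close>

definition subgrp :: "'a::ab_group_add set \<Rightarrow> bool" where
  "subgrp H \<longleftrightarrow> 0 \<in> H \<and> (\<forall>x\<in>H. \<forall>y\<in>H. x - y \<in> H)"

definition coset :: "'a::ab_group_add \<Rightarrow> 'a set \<Rightarrow> 'a set" where
  "coset x J = (\<lambda>j. x + j) ` J"

definition cosets :: "'a::ab_group_add set \<Rightarrow> 'a set set" where
  "cosets J = {coset x J | x. True}"

definition idg :: "'a::ab_group_add set \<Rightarrow> 'a set" where
  "idg T = \<Inter>{H. subgrp H \<and> {x - y | x y. x \<in> T \<and> y \<in> T} \<subseteq> H}"

definition union_of_cosets :: "'a::ab_group_add set \<Rightarrow> 'a set \<Rightarrow> bool" where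
  "union_of_cosets A J \<longleftrightarrow> (\<exists>C \<subseteq> cosets J. A = \<Union>C)"

definition Ncount :: "'a::ab_group_add set set \<Rightarrow> 'a set \<Rightarrow> 'a \<Rightarrow> nat" where
  "Ncount \<A> A \<delta> = card {(a, b). a \<in> A \<and> (\<exists>B\<in>\<A>. B \<noteq> A \<and> b \<in> B) \<and> a - b = \<delta>}"

definition bimodal :: "'a::ab_group_add set set \<Rightarrow> bool" where
  "bimodal \<A> \<longleftrightarrow> disjoint \<A> \<and>
     (\<forall>A\<in>\<A>. \<forall>\<delta>. \<delta> \<noteq> 0 \<longrightarrow> Ncount \<A> A \<delta> \<in> {0, card A})"

end

theory Submission
  imports Defs
begin

lemma subgrp_add: "subgrp H \<Longrightarrow> x \<in> H \<Longrightarrow> y \<in> H \<Longrightarrow> x + y \<in> H"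
  unfolding subgrp_def by (metis diff_0 diff_minus_eq_add)

lemma subgrp_diff: "subgrp H \<Longrightarrow> x \<in> H \<Longrightarrow> y \<in> H \<Longrightarrow> x - y \<in> H"
  unfolding subgrp_def by blast

lemma coset_mem: "z \<in> coset x J \<longleftrightarrow> z - x \<in> J"
  unfolding coset_def by (auto simp: image_iff intro!: bexI[of _ "z - x"])

lemma coset_shift: "subgrp J \<Longrightarrow> z \<in> coset x J \<Longrightarrow> d \<in> J \<Longrightarrow> z + d \<in> coset x J"
  by (simp add: coset_mem) (metis add_diff_eq diff_add_eq subgrp_add)

lemma coset_diff: "subgrp J \<Longrightarrow> z \<in> coset x J \<Longrightarrow> w \<in> coset x J \<Longrightarrow> z - w \<in> J"
  proof -
  assume J: "subgrp J" and zw: "z \<in> coset x J" "w \<in> coset x J"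
  have "(z - x) - (w - x) \<in> J" using subgrp_diff[OF J] zw unfolding coset_mem by blast
  then show ?thesis by simp
qed

lemma coset_eq: "subgrp J \<Longrightarrow> z \<in> coset c J \<Longrightarrow> z \<in> coset c' J \<Longrightarrow> coset c J = coset c' J"
proof -
  assume J: "subgrp J" and z: "z \<in> coset c J" "z \<in> coset c' J"
  have d: "c - c' \<in> J"
    using subgrp_diff[OF J, of "z - c'" "z - c"] z by (simp add: coset_mem)
  have d': "c' - c \<in> J"
    using subgrp_diff[OF J, of "z - c" "z - c'"] z by (simp add: coset_mem)
  show ?thesis
  proof (rule set_eqI)
    fix y
    show "y \<in> coset c J \<longleftrightarrow> y \<in> coset c' J"
      using subgrp_add[OF J, of "y - c" "c - c'"] subgrp_add[OF J, of "y - c'" "c' - c"] d d'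
      by (auto simp: coset_mem)
  qed
qed

lemma coset_zero: "coset 0 J = J"
  by (auto simp: coset_def)

lemma union_of_cosets_shift:
  assumes "union_of_cosets A J" "subgrp J" "z \<in> A" "d \<in> J"
  shows "z + d \<in> A"
proof -
  obtain C where C: "C \<subseteq> cosets J" "A = \<Union>C" using assms(1) unfolding union_of_cosets_def by blast
  then obtain K where K: "K \<in> C" "z \<in> K" using assms(3) by blast
  then obtain x where "K = coset x J" using C unfolding cosets_def by blast
  then have "z + d \<in> K" using coset_shift[OF assms(2)] K assms(4) by blast
  then show ?thesis using K C by blast
qed

lemma idg_coset: assumes J: "subgrp J" shows "idg (coset x J) = J"
proof
  show "idg (coset x J) \<subseteq> J"
    unfolding idg_def using J coset_diff[OF J] by blast
  show "J \<subseteq> idg (coset x J)"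
  proof
    fix j assume j: "j \<in> J"
    have 0: "0 \<in> J" using J unfolding subgrp_def by blast
    have "j \<in> {u - v | u v. u \<in> coset x J \<and> v \<in> coset x J}"
      proof -
      have "x + j \<in> coset x J" "x \<in> coset x J" using j 0 by (auto simp: coset_mem)
      moreover have "j = (x + j) - x" by simp
      ultimately show ?thesis by blast
    qed
    then show "j \<in> idg (coset x J)" unfolding idg_def by blast
  qed
qed

lemma card_coset: "card (coset x J) = card J"
  unfolding coset_def by (rule card_image) (simp add: inj_on_def)

lemma Ncount_eq:
  "Ncount \<A> A \<delta> = card {a\<in>A. a - \<delta> \<in> {b. \<exists>B\<in>\<A>. B \<noteq> A \<and> b \<in> B}}"
proof -
  have "{(a, b). a \<in> A \<and> (\<exists>B\<in>\<A>. B \<noteq> A \<and> b \<in> B) \<and> a - b = \<delta>}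
     = (\<lambda>a. (a, a - \<delta>)) ` {a\<in>A. a - \<delta> \<in> {b. \<exists>B\<in>\<A>. B \<noteq> A \<and> b \<in> B}}"
    by (auto simp: image_iff algebra_simps)
  moreover have "inj_on (\<lambda>a. (a, a - \<delta>)) X" for X by (simp add: inj_on_def)
  ultimately show ?thesis unfolding Ncount_def by (simp add: card_image)
qed

lemma card_filter_all:
  assumes "\<forall>a\<in>A. \<forall>a'\<in>A. Q a \<longrightarrow> Q a'"
  shows "card {a\<in>A. Q a} \<in> {0, card A}"
proof (cases "\<exists>a\<in>A. Q a")
  case True
  then have "{a\<in>A. Q a} = A" using assms by blast
  then show ?thesis by simp
next
  case False
  then have "{a\<in>A. Q a} = {}" by blast
  then show ?thesis by (simp only: card.empty) simp
qed

theorem theorem3p17: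
  fixes H1 A1 :: "'a::{finite, ab_group_add} set"
    and Cs :: "'a set set"
    and P :: "'a set \<Rightarrow> 'a set set"
    and \<A> :: "'a set set"
  assumes "subgrp H1"
    and "A1 \<subset> H1"
    and "idg A1 = H1"
    and "Cs \<subseteq> cosets H1 - {H1}"
    and "\<forall>C\<in>Cs. partition_on C (P C) \<and>
           (\<forall>B\<in>P C. \<exists>J. subgrp J \<and> union_of_cosets A1 J \<and> B \<in> cosets J)"
    and "\<A> = insert A1 (\<Union>C\<in>Cs. P C)"
  shows "disjoint \<A> \<and> bimodal \<A> \<and>
         (\<forall>A\<in>\<A>. card A < card (idg A) \<longleftrightarrow> A = A1)"
proof -
  note H1 = assms(1)
  have F1: "B \<subseteq> C" "B \<noteq> {}" if "C \<in> Cs" "B \<in> P C" for C B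
    using assms(5) that unfolding partition_on_def by blast+
  have F2: "\<exists>B\<in>P C. z \<in> B" if "C \<in> Cs" "z \<in> C" for C z
    using assms(5) that unfolding partition_on_def by blast
  have F6: "B \<inter> B' = {}" if "C \<in> Cs" "B \<in> P C" "B' \<in> P C" "B \<noteq> B'" for C B B'
    using assms(5) that unfolding partition_on_def disjoint_def by blast
  have Cco: "\<exists>c. C = coset c H1" if "C \<in> Cs" for C
    using assms(4) that unfolding cosets_def by blast
  have F3: "C \<inter> H1 = {}" if CC: "C \<in> Cs" for C
  proof (rule ccontr)
    assume "C \<inter> H1 \<noteq> {}"
    then obtain z where z: "z \<in> C" "z \<in> H1" by blast
    obtain c where c: "C = coset c H1" using Cco[OF CC] by blast
    have "z \<in> coset 0 H1" using z coset_zero by metis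
    then have "C = H1" using coset_eq[OF H1] z c coset_zero by metis
    then show False using assms(4) CC by blast
  qed
  have F4: "C = C'" if "C \<in> Cs" "C' \<in> Cs" "z \<in> C" "z \<in> C'" for C C' z
    using Cco that coset_eq[OF H1] by metis
  have F5: "z + d \<in> C" if "C \<in> Cs" "z \<in> C" "d \<in> H1" for C z d
    using Cco that coset_shift[OF H1] by metis
  have A1H: "A1 \<subseteq> H1" using assms(2) by blast
  have pne: "B \<noteq> A1" if "C \<in> Cs" "B \<in> P C" for C B
    using F1[OF that] F3[OF that(1)] A1H by blast
  have mem: "X = A1 \<or> (\<exists>C\<in>Cs. X \<in> P C)" if "X \<in> \<A>" for X
    using that assms(6) by blast
  have disj: "X \<inter> Y = {}" if "X \<in> \<A>" "Y \<in> \<A>" "X \<noteq> Y" for X Y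
  proof -
    have g: "X \<inter> Y = {}" if "C \<in> Cs" "X \<in> P C" "C' \<in> Cs" "Y \<in> P C'" "X \<noteq> Y" for C C' X Y
    proof (cases "C = C'")
      case True then show ?thesis using F6 that by blast
    next
      case False
      then show ?thesis using F1[OF that(1,2)] F1[OF that(3,4)] F4 that by blast
    qed
    have h: "X \<inter> A1 = {}" if "C \<in> Cs" "X \<in> P C" for C X
      using F1[OF that] F3[OF that(1)] A1H by blast
    show ?thesis using mem[OF that(1)] mem[OF that(2)] that(3) g h by blast
  qed
  have disjA: "disjoint \<A>"
    unfolding disjoint_def using disj by (auto simp: disjnt_def)
  have key: "a' - \<delta> \<in> {b. \<exists>B\<in>\<A>. B \<noteq> A \<and> b \<in> B}"
    if A: "A \<in> \<A>" and a: "a \<in> A" "a' \<in> A" and W: "a - \<delta> \<in> {b. \<exists>B\<in>\<A>. B \<noteq> A \<and> b \<in> B}"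
    for A a a' \<delta>
  proof (cases "A = A1")
    case True
    from W obtain B where B: "B \<in> \<A>" "B \<noteq> A1" "a - \<delta> \<in> B" using True by blast
    then obtain C where C: "C \<in> Cs" "B \<in> P C" using mem by blast
    have "a - \<delta> \<in> C" using F1[OF C] B by blast
    moreover have "a' - a \<in> H1" using a True A1H subgrp_diff[OF H1] by blast
    ultimately have "(a - \<delta>) + (a' - a) \<in> C" using F5 C by blast
    then have "a' - \<delta> \<in> C" by (simp add: algebra_simps)
    then obtain B' where "B' \<in> P C" "a' - \<delta> \<in> B'" using F2 C by blast
    then show ?thesis using pne[OF C(1)] True assms(6) C by blast
  next
    case False
    then obtain C where C: "C \<in> Cs" "A \<in> P C" using mem A by blast
    then obtain J where J: "subgrp J" "union_of_cosets A1 J" "A \<in> cosets J"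
      using assms(5) by blast
    obtain x where x: "A = coset x J" using J(3) unfolding cosets_def by blast
    have JH: "J \<subseteq> H1"
    proof
      fix j assume j: "j \<in> J"
      have 0: "0 \<in> J" using J(1) unfolding subgrp_def by blast
      have "x + j \<in> C" "x \<in> C" using F1[OF C] x j 0 by (auto simp: coset_mem)
      then have "(x + j) - x \<in> H1" using Cco[OF C(1)] coset_diff[OF H1] by metis
      then show "j \<in> H1" by simp
    qed
    have d: "a' - a \<in> J" using coset_diff[OF J(1)] a x by blast
    have eq: "a' - \<delta> = (a - \<delta>) + (a' - a)" by (simp add: algebra_simps)
    from W obtain B where B: "B \<in> \<A>" "B \<noteq> A" "a - \<delta> \<in> B" by blast
    show ?thesis
    proof (cases "B = A1")
      case True
      then have "a' - \<delta> \<in> A1" using union_of_cosets_shift[OF J(2) J(1) _ d] B eq by metis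
      then show ?thesis using False assms(6) by blast
    next
      case BA: False
      then obtain C' where C': "C' \<in> Cs" "B \<in> P C'" using mem B by blast
      have "a - \<delta> \<in> C'" using F1[OF C'] B by blast
      then have "a' - \<delta> \<in> C'" using F5[OF C'(1) _ ] d JH eq by (metis subsetD)
      then obtain B' where B': "B' \<in> P C'" "a' - \<delta> \<in> B'" using F2 C' by blast
      have B'A: "B' \<in> \<A>" using assms(6) C' B' by blast
      have "B' \<noteq> A"
      proof
        assume "B' = A"
        then have "a' - \<delta> \<in> coset x J" using B' x by simp
        then have "a' - (a' - \<delta>) \<in> J" using coset_diff[OF J(1)] a x by blast
        then have "\<delta> \<in> J" by simp
        moreover have "a - x \<in> J" using a x coset_mem by blast
        ultimately have "(a - x) - \<delta> \<in> J" using subgrp_diff[OF J(1)] by blast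
        then have "a - \<delta> - x \<in> J" by (simp add: algebra_simps)
        then have "a - \<delta> \<in> A" using x coset_mem by blast
        then show False using disj[OF A B(1)] B by blast
      qed
      then show ?thesis using B'A B' by blast
    qed
  qed
  have bim: "bimodal \<A>"
    unfolding bimodal_def
  proof (intro conjI disjA ballI allI impI)
    fix A \<delta> assume A: "A \<in> \<A>"
    show "Ncount \<A> A \<delta> \<in> {0, card A}"
      unfolding Ncount_eq
    proof (rule card_filter_all, intro ballI impI)
      fix a a' assume "a \<in> A" "a' \<in> A" "a - \<delta> \<in> {b. \<exists>B\<in>\<A>. B \<noteq> A \<and> b \<in> B}"
      then show "a' - \<delta> \<in> {b. \<exists>B\<in>\<A>. B \<noteq> A \<and> b \<in> B}" by (rule key[OF A])
    qed
  qed
  have cardp: "card A < card (idg A) \<longleftrightarrow> A = A1" if A: "A \<in> \<A>" for A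
  proof (cases "A = A1")
    case True
    then show ?thesis using assms(2,3) by (simp add: psubset_card_mono)
  next
    case False
    then obtain C where C: "C \<in> Cs" "A \<in> P C" using mem A by blast
    then obtain J where J: "subgrp J" "A \<in> cosets J"
      using assms(5) by blast
    obtain x where x: "A = coset x J" using J(2) unfolding cosets_def by blast
    show ?thesis using False x idg_coset[OF J(1)] card_coset[of x J] by simp
  qed
  show ?thesis using disjA bim cardp by blast
qed

end
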